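(* Let $A$ be a finite alphabet, $E\subseteq W(A)$ and $\vec s\in V^\infty(A)$ such that $E$ is large in $\vec s$. Let $r\ge 2$ and $E=\bigcup_{i=1}^r E_i$. Then there exist $1\le i\le r$ and $\vec t\in V^\infty(A)$ with $\vec t\le\vec s$ such that $E_i$ is large in $\vec t$.
   Context: $\mathbb N=\{0,1,2,\dots\}$. Let $A$ be a finite nonempty alphabet. $W(A)$ denotes the set of all finite words over $A$, including the empty word; words are concatenated by juxtaposition. Fix a symbol $x\notin A$. A variable word over $A$ is a finite word over $A\cup\{x\}$ in which $x$ occurs at least once; $V(A)$ is the set of variable words. For $s(x)\in V(A)$ and $a\in A\cup\{x\}$, $s(a)$ is obtained by replacing every occurrence of $x$ by $a$. $V^\infty(A)$ is the set of infinite sequences of variable words. For a sequence $(s_n(x))_{n\in I}$ of variable words indexed by a set $I\subseteq\mathbb N$ that is either a finite interval or of the form $\{m,m+1,\dots\}$: the constant span $\langle (s_n(x))_{n\in I}\rangle_c$ is the set of all words $s_{l_0}(a_0)s_{l_1}(a_1)\cdots s_{l_j}(a_j)$ with $j\ge 0$, $l_0<\dots<l_j$ in $I$ and $a_0,\dots,a_j\in A$; the variable span $\langle (s_n(x))_{n\in I}\rangle_v$ is the set of all words $s_{l_0}(a_0)\cdots s_{l_j}(a_j)$ with $j\ge0$, $l_0<\dots<l_j$ in $I$, $a_0,\dots,a_j\in A\cup\{x\}$ and at least one $a_i=x$. Extracted subsequences: let $\vec s=(s_n(x))_{n=0}^\infty\in V^\infty(A)$. A finite sequence $(t_n(x))_{n=0}^l$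 of variable words is an extracted subsequence of $\vec s$ if there exist integers $0=m_0<m_1<\dots<m_{l+1}$ with $t_i(x)\in\langle (s_n(x))_{n=m_i}^{m_{i+1}-1}\rangle_v$ for all $0\le i\le l$. An infinite sequence $\vec t=(t_n(x))_{n=0}^\infty$ is an extracted subsequence of $\vec s$ if every initial segment $(t_n(x))_{n=0}^l$ is a finite extracted subsequence of $\vec s$. We write $\vec t\le\vec s$. A set $E\subseteq W(A)$ is large in $\vec s\in V^\infty(A)$ if $E\cap\langle\vec w\rangle_c\neq\emptyset$ for every infinite extracted subsequence $\vec w$ of $\vec s$. *)

theory Defs
  imports Main
begin

text \<open>Encoding: the alphabet A is a set of type 'a; letters of A \<union> {x} are
  represented in 'a option, with None standing for the variable x and Some a for a \<in> A.\<close>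

definition is_word :: "'a set \<Rightarrow> 'a list \<Rightarrow> bool" where
  "is_word A w \<longleftrightarrow> set w \<subseteq> A"

definition is_varword :: "'a set \<Rightarrow> 'a option list \<Rightarrow> bool" where
  "is_varword A s \<longleftrightarrow> set s \<subseteq> Some ` A \<union> {None} \<and> None \<in> set s"

definition subst_c :: "'a option list \<Rightarrow> 'a \<Rightarrow> 'a list" where
  "subst_c s a = map (\<lambda>c. case c of None \<Rightarrow> a | Some b \<Rightarrow> b) s"

definition subst_v :: "'a option list \<Rightarrow> 'a option \<Rightarrow> 'a option list" where
  "subst_v s c = map (\<lambda>y. case y of None \<Rightarrow> c | Some b \<Rightarrow> Some b) s"

definition is_vseq :: "'a set \<Rightarrow> (nat \<Rightarrow> 'a option list) \<Rightarrow> bool" where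
  "is_vseq A s \<longleftrightarrow> (\<forall>n. is_varword A (s n))"

definition cspan :: "'a set \<Rightarrow> (nat \<Rightarrow> 'a option list) \<Rightarrow> nat set \<Rightarrow> 'a list set" where
  "cspan A s I = {w. \<exists>ls as. ls \<noteq> [] \<and> sorted_wrt (<) ls \<and> set ls \<subseteq> I \<and>
      length as = length ls \<and> set as \<subseteq> A \<and>
      w = concat (map2 (\<lambda>l a. subst_c (s l) a) ls as)}"

definition vspan :: "'a set \<Rightarrow> (nat \<Rightarrow> 'a option list) \<Rightarrow> nat set \<Rightarrow> 'a option list set" where
  "vspan A s I = {w. \<exists>ls as. ls \<noteq> [] \<and> sorted_wrt (<) ls \<and> set ls \<subseteq> I \<and>
      length as = length ls \<and> set as \<subseteq> Some ` A \<union> {None} \<and> None \<in> set as \<and>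
      w = concat (map2 (\<lambda>l c. subst_v (s l) c) ls as)}"

definition extracted :: "'a set \<Rightarrow> (nat \<Rightarrow> 'a option list) \<Rightarrow> (nat \<Rightarrow> 'a option list) \<Rightarrow> bool" where
  "extracted A t s \<longleftrightarrow> (\<forall>l. \<exists>m :: nat \<Rightarrow> nat. m 0 = 0 \<and> (\<forall>i\<le>l. m i < m (Suc i)) \<and>
      (\<forall>i\<le>l. t i \<in> vspan A s {m i..<m (Suc i)}))"

definition large :: "'a set \<Rightarrow> 'a list set \<Rightarrow> (nat \<Rightarrow> 'a option list) \<Rightarrow> bool" where
  "large A E s \<longleftrightarrow> (\<forall>w. is_vseq A w \<and> extracted A w s \<longrightarrow> E \<inter> cspan A w UNIV \<noteq> {})"

end

theory Submission imports Defs begin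

lemma vspan_iff: "w \<in> vspan A s I \<longleftrightarrow> (\<exists>ps. ps \<noteq> [] \<and> sorted_wrt (<) (map fst ps) \<and> fst ` set ps \<subseteq> I
   \<and> snd ` set ps \<subseteq> Some ` A \<union> {None} \<and> None \<in> snd ` set ps
   \<and> w = concat (map (\<lambda>(l,c). subst_v (s l) c) ps))"
proof
  assume "w \<in> vspan A s I"
  then obtain ls as where h: "ls \<noteq> []" "sorted_wrt (<) ls" "set ls \<subseteq> I"
      "length as = length ls" "set as \<subseteq> Some ` A \<union> {None}" "None \<in> set as"
      "w = concat (map2 (\<lambda>l c. subst_v (s l) c) ls as)" unfolding vspan_def by blast
  show "\<exists>ps. ps \<noteq> [] \<and> sorted_wrt (<) (map fst ps) \<and> fst ` set ps \<subseteq> I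
   \<and> snd ` set ps \<subseteq> Some ` A \<union> {None} \<and> None \<in> snd ` set ps
   \<and> w = concat (map (\<lambda>(l,c). subst_v (s l) c) ps)"
  proof -
    have z: "fst ` set (zip ls as) = set ls" "snd ` set (zip ls as) = set as"
      using h(4) by (metis map_fst_zip set_map, metis map_snd_zip set_map)
    show ?thesis by (rule exI[of _ "zip ls as"]) (use h z in \<open>auto simp: zip_eq_Nil_iff\<close>)
  qed
next
  assume "\<exists>ps. ps \<noteq> [] \<and> sorted_wrt (<) (map fst ps) \<and> fst ` set ps \<subseteq> I
   \<and> snd ` set ps \<subseteq> Some ` A \<union> {None} \<and> None \<in> snd ` set ps
   \<and> w = concat (map (\<lambda>(l,c). subst_v (s l) c) ps)"
  then obtain ps where h: "ps \<noteq> []" "sorted_wrt (<) (map fst ps)" "fst ` set ps \<subseteq> I"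
   "snd ` set ps \<subseteq> Some ` A \<union> {None}" "None \<in> snd ` set ps"
   "w = concat (map (\<lambda>(l,c). subst_v (s l) c) ps)" by blast
  show "w \<in> vspan A s I" unfolding vspan_def
    apply (rule CollectI, rule exI[of _ "map fst ps"], rule exI[of _ "map snd ps"])
    using h by (simp add: zip_map_fst_snd)
qed

lemma cspan_iff: "w \<in> cspan A s I \<longleftrightarrow> (\<exists>ps. ps \<noteq> [] \<and> sorted_wrt (<) (map fst ps) \<and> fst ` set ps \<subseteq> I
   \<and> snd ` set ps \<subseteq> A
   \<and> w = concat (map (\<lambda>(l,c). subst_c (s l) c) ps))"
proof
  assume "w \<in> cspan A s I"
  then obtain ls as where h: "ls \<noteq> []" "sorted_wrt (<) ls" "set ls \<subseteq> I"
      "length as = length ls" "set as \<subseteq> A"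
      "w = concat (map2 (\<lambda>l c. subst_c (s l) c) ls as)" unfolding cspan_def by blast
  show "\<exists>ps. ps \<noteq> [] \<and> sorted_wrt (<) (map fst ps) \<and> fst ` set ps \<subseteq> I
   \<and> snd ` set ps \<subseteq> A
   \<and> w = concat (map (\<lambda>(l,c). subst_c (s l) c) ps)"
  proof -
    have z: "fst ` set (zip ls as) = set ls" "snd ` set (zip ls as) = set as"
      using h(4) by (metis map_fst_zip set_map, metis map_snd_zip set_map)
    show ?thesis by (rule exI[of _ "zip ls as"]) (use h z in \<open>auto simp: zip_eq_Nil_iff\<close>)
  qed
next
  assume "\<exists>ps. ps \<noteq> [] \<and> sorted_wrt (<) (map fst ps) \<and> fst ` set ps \<subseteq> I
   \<and> snd ` set ps \<subseteq> A
   \<and> w = concat (map (\<lambda>(l,c). subst_c (s l) c) ps)"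
  then obtain ps where h: "ps \<noteq> []" "sorted_wrt (<) (map fst ps)" "fst ` set ps \<subseteq> I"
   "snd ` set ps \<subseteq> A"
   "w = concat (map (\<lambda>(l,c). subst_c (s l) c) ps)" by blast
  show "w \<in> cspan A s I" unfolding cspan_def
    apply (rule CollectI, rule exI[of _ "map fst ps"], rule exI[of _ "map snd ps"])
    using h by (simp add: zip_map_fst_snd)
qed

lemma compose_eq:
  assumes "\<forall>k\<in>fst ` set ps. w k = concat (map (\<lambda>(j,d). subst_v (s j) d) (Q k))"
    and Gc: "\<And>xs c. G (concat xs) c = concat (map (\<lambda>x. G x c) xs)"
    and Gs: "\<And>x d c. G (subst_v x d) c = G x (H d c)"
  shows "concat (map (\<lambda>(k,c). G (w k) c) ps)
     = concat (map (\<lambda>(j,e). G (s j) e) (concat (map (\<lambda>(k,c). map (\<lambda>(j,d). (j, H d c)) (Q k)) ps)))"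
  using assms(1)
proof (induction ps)
  case Nil then show ?case by simp
next
  case (Cons p ps)
  obtain k c where p: "p = (k,c)" by force
  have "G (w k) c = concat (map (\<lambda>(j,e). G (s j) e) (map (\<lambda>(j,d). (j, H d c)) (Q k)))"
    using Cons.prems p by (simp add: Gc Gs map_concat case_prod_beta o_def)
  then show ?case using Cons p by simp
qed

lemma mono_upto: "\<forall>i\<le>l. (m::nat\<Rightarrow>nat) i < m (Suc i) \<Longrightarrow> i \<le> j \<Longrightarrow> j \<le> Suc l \<Longrightarrow> m i \<le> m j"
proof (induction j)
  case 0 then show ?case by simp
next
  case (Suc j) then show ?case
    by (metis le_Suc_eq less_imp_le_nat not_less_eq_eq order_trans)
qed

lemma sorted_blocks:
  assumes "sorted_wrt (<) (map fst ps)"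
    and "\<forall>k\<in>fst`set ps. sorted_wrt (<) (map fst (Q k)) \<and> fst ` set (Q k) \<subseteq> {m k..<m (Suc k)}"
    and "\<forall>k\<in>fst`set ps. \<forall>k'\<in>fst`set ps. k<k' \<longrightarrow> m (Suc k) \<le> (m::nat\<Rightarrow>nat) k'"
  shows "sorted_wrt (<) (map fst (concat (map (\<lambda>(k,c). map (\<lambda>(j,d). (j, H d c)) (Q k)) ps)))"
  using assms
proof (induction ps)
  case Nil then show ?case by simp
next
  case (Cons p ps)
  obtain k c where p: "p = (k,c)" by force
  have mf: "map fst (map (\<lambda>(j,d). (j, H d c)) (Q k)) = map fst (Q k)" by (induction "Q k") auto
  have "\<forall>x\<in>set (map fst (Q k)). \<forall>y\<in>set (map fst (concat (map (\<lambda>(k,c). map (\<lambda>(j,d). (j, H d c)) (Q k)) ps))). x < y"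
  proof (intro ballI)
    fix x y assume x: "x \<in> set (map fst (Q k))" and y: "y \<in> set (map fst (concat (map (\<lambda>(k,c). map (\<lambda>(j,d). (j, H d c)) (Q k)) ps)))"
    from y obtain k' c' d where k': "(k',c') \<in> set ps" "(y,d) \<in> set (Q k')" by auto
    have "k < k'" using Cons.prems(1) p k'(1) by force
    hence "m (Suc k) \<le> m k'" using Cons.prems(3) p k'(1) by force
    moreover have "x < m (Suc k)" using Cons.prems(2) p x by auto
    moreover have "m k' \<le> y" using Cons.prems(2) k' by force
    ultimately show "x < y" by simp
  qed
  moreover have "sorted_wrt (<) (map fst (Q k))" using Cons.prems(2) p by auto
  moreover have "sorted_wrt (<) (map fst (concat (map (\<lambda>(k,c). map (\<lambda>(j,d). (j, H d c)) (Q k)) ps)))"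
    using Cons by auto
  ultimately show ?case using p mf by (simp add: sorted_wrt_append split_def o_def)
qed

definition hv :: "'a option \<Rightarrow> 'a option \<Rightarrow> 'a option" where
  "hv d c = (case d of None \<Rightarrow> c | Some b \<Rightarrow> Some b)"
definition hc :: "'a option \<Rightarrow> 'a \<Rightarrow> 'a" where
  "hc d a = (case d of None \<Rightarrow> a | Some b \<Rightarrow> b)"

lemma v_concat: "subst_v (concat xs) c = concat (map (\<lambda>x. subst_v x c) xs)"
  by (simp add: subst_v_def map_concat)
lemma v_sub: "subst_v (subst_v x d) c = subst_v x (hv d c)"
  by (auto simp: subst_v_def hv_def split: option.split)
lemma c_concat: "subst_c (concat xs) c = concat (map (\<lambda>x. subst_c x c) xs)"
  by (simp add: subst_c_def map_concat)
lemma c_sub: "subst_c (subst_v x d) c = subst_c x (hc d c)"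
  by (auto simp: subst_v_def subst_c_def hc_def split: option.split)

lemma set_blocks_aux: "(j,e) \<in> set (map (\<lambda>(j,d). (j, H d c)) q) \<longleftrightarrow> (\<exists>d. (j,d) \<in> set q \<and> e = H d c)"
  by (induction q) auto
lemma set_blocks: "(j,e) \<in> set (concat (map (\<lambda>(k,c). map (\<lambda>(j,d). (j, H d c)) (Q k)) ps))
   \<longleftrightarrow> (\<exists>k c d. (k,c) \<in> set ps \<and> (j,d) \<in> set (Q k) \<and> e = H d c)"
proof (induction ps)
  case Nil then show ?case by simp
next
  case (Cons p ps)
  obtain k c where p: "p = (k,c)" by force
  show ?case
  proof
    assume "(j,e) \<in> set (concat (map (\<lambda>(k,c). map (\<lambda>(j,d). (j, H d c)) (Q k)) (p#ps)))"
    then have "(j,e) \<in> set (map (\<lambda>(j,d). (j, H d c)) (Q k)) \<or> (j,e) \<in> set (concat (map (\<lambda>(k,c). map (\<lambda>(j,d). (j, H d c)) (Q k)) ps))"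
      using p by (simp del: set_map set_concat)
    then show "\<exists>k' c' d. (k',c') \<in> set (p#ps) \<and> (j,d) \<in> set (Q k') \<and> e = H d c'"
      using Cons.IH p set_blocks_aux[of j e H c "Q k"] by auto
  next
    assume "\<exists>k' c' d. (k',c') \<in> set (p#ps) \<and> (j,d) \<in> set (Q k') \<and> e = H d c'"
    then obtain k' c' d where h: "(k',c') \<in> set (p#ps)" "(j,d) \<in> set (Q k')" "e = H d c'" by blast
    show "(j,e) \<in> set (concat (map (\<lambda>(k,c). map (\<lambda>(j,d). (j, H d c)) (Q k)) (p#ps)))"
    proof (cases "(k',c') = p")
      case True
      then have "(j,e) \<in> set (map (\<lambda>(j,d). (j, H d c)) (Q k))" using h p set_blocks_aux[of j e H c "Q k"] by auto
      then show ?thesis using p by (simp del: set_map set_concat)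
    next
      case False
      then have "(j,e) \<in> set (concat (map (\<lambda>(k,c). map (\<lambda>(j,d). (j, H d c)) (Q k)) ps))" using h Cons.IH by auto
      then show ?thesis using p by (simp del: set_map set_concat)
    qed
  qed
qed

lemma extracted_refl: "extracted A s s"
proof -
  have "subst_v x None = x" for x :: "'a option list" by (induction x) (auto simp: subst_v_def split: option.split)
  hence "s i \<in> vspan A s {i..<Suc i}" for i unfolding vspan_iff
    by (intro exI[of _ "[(i,None)]"]) auto
  then show ?thesis unfolding extracted_def by (intro allI exI[of _ "\<lambda>i. i"]) auto
qed

lemma extracted_trans:
  assumes tw: "extracted A t w" and ws: "extracted A w s" shows "extracted A t s"
  unfolding extracted_def
proof
  fix l
  from tw obtain m where m: "m 0 = 0" "\<forall>i\<le>l. m i < m (Suc i)"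
    "\<forall>i\<le>l. t i \<in> vspan A w {m i..<m (Suc i)}" unfolding extracted_def by blast
  define L where "L = m (Suc l)"
  from ws obtain m' where m': "m' 0 = 0" "\<forall>i\<le>L. m' i < m' (Suc i)"
    "\<forall>i\<le>L. w i \<in> vspan A s {m' i..<m' (Suc i)}" unfolding extracted_def by blast
  have "\<forall>k\<in>{..L}. \<exists>q. q \<noteq> [] \<and> sorted_wrt (<) (map fst q) \<and> fst ` set q \<subseteq> {m' k..<m' (Suc k)}
   \<and> snd ` set q \<subseteq> Some ` A \<union> {None} \<and> None \<in> snd ` set q
   \<and> w k = concat (map (\<lambda>(l,c). subst_v (s l) c) q)"
    using m'(3) unfolding vspan_iff by auto
  then obtain Q where Q: "\<forall>k\<in>{..L}. Q k \<noteq> [] \<and> sorted_wrt (<) (map fst (Q k)) \<and> fst ` set (Q k) \<subseteq> {m' k..<m' (Suc k)}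
   \<and> snd ` set (Q k) \<subseteq> Some ` A \<union> {None} \<and> None \<in> snd ` set (Q k)
   \<and> w k = concat (map (\<lambda>(l,c). subst_v (s l) c) (Q k))"
    by (rule bchoice[elim_format]) blast
  have Q1: "Q k \<noteq> []" and Q2: "sorted_wrt (<) (map fst (Q k))" and Q3: "fst ` set (Q k) \<subseteq> {m' k..<m' (Suc k)}"
    and Q4: "snd ` set (Q k) \<subseteq> Some ` A \<union> {None}" and Q5: "None \<in> snd ` set (Q k)"
    and Q6: "w k = concat (map (\<lambda>(l,c). subst_v (s l) c) (Q k))" if "k \<le> L" for k
    using Q that by auto
  have mm: "m i \<le> m j" if "i \<le> j" "j \<le> Suc l" for i j using mono_upto[OF m(2)] that by blast
  have mm': "m' i \<le> m' j" if "i \<le> j" "j \<le> Suc L" for i j using mono_upto[OF m'(2)] that by blast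
  show "\<exists>m''. m'' 0 = 0 \<and> (\<forall>i\<le>l. m'' i < m'' (Suc i)) \<and> (\<forall>i\<le>l. t i \<in> vspan A s {m'' i..<m'' (Suc i)})"
  proof (intro exI[of _ "\<lambda>i. m' (m i)"] conjI allI impI)
    show "m' (m 0) = 0" using m m' by simp
  next
    fix i assume i: "i \<le> l"
    have a: "m i < m (Suc i)" "m (Suc i) \<le> L" using m(2) i mm[of "Suc i" "Suc l"] L_def by auto
    then have "m' (m i) < m' (Suc (m i))" using m'(2) by auto
    also have "\<dots> \<le> m' (m (Suc i))" using a mm' by auto
    finally show "m' (m i) < m' (m (Suc i))" .
  next
    fix i assume i: "i \<le> l"
    have a: "m i < m (Suc i)" "m (Suc i) \<le> L" using m(2) i mm[of "Suc i" "Suc l"] L_def by auto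
    from m(3) i obtain ps where ps: "ps \<noteq> []" "sorted_wrt (<) (map fst ps)" "fst ` set ps \<subseteq> {m i..<m (Suc i)}"
      "snd ` set ps \<subseteq> Some ` A \<union> {None}" "None \<in> snd ` set ps"
      "t i = concat (map (\<lambda>(l,c). subst_v (w l) c) ps)" unfolding vspan_iff by blast
    have kL: "k \<in> {..L}" if "k \<in> fst ` set ps" for k using that ps(3) a by force
    define qs where "qs = concat (map (\<lambda>(k,c). map (\<lambda>(j,d). (j, hv d c)) (Q k)) ps)"
    have eq: "t i = concat (map (\<lambda>(j,e). subst_v (s j) e) qs)"
      unfolding ps(6) qs_def
      by (rule compose_eq[where G=subst_v]) (use Q6 kL in \<open>auto simp: v_concat v_sub\<close>)
    have so: "sorted_wrt (<) (map fst qs)" unfolding qs_def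
    proof (rule sorted_blocks[where m=m'])
      show "\<forall>k\<in>fst ` set ps. \<forall>k'\<in>fst ` set ps. k < k' \<longrightarrow> m' (Suc k) \<le> m' k'"
      proof (intro ballI impI)
        fix k k' assume "k \<in> fst ` set ps" "k' \<in> fst ` set ps" "k < k'"
        then show "m' (Suc k) \<le> m' k'" using kL[of k'] mm'[of "Suc k" k'] by simp
      qed
      show "\<forall>k\<in>fst ` set ps. sorted_wrt (<) (map fst (Q k)) \<and> fst ` set (Q k) \<subseteq> {m' k..<m' (Suc k)}"
        using Q2 Q3 kL by auto
    qed (fact ps(2))
    have setq: "(j,e) \<in> set qs \<longleftrightarrow> (\<exists>k c d. (k,c) \<in> set ps \<and> (j,d) \<in> set (Q k) \<and> e = hv d c)" for j e
      unfolding qs_def by (rule set_blocks)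
    obtain k0 where k0: "(k0, None) \<in> set ps" using ps(5) by force
    have "k0 \<le> L" using kL[of k0] k0 by (simp add: rev_image_eqI)
    then obtain j0 where j0: "(j0, None) \<in> set (Q k0)" using Q5 by force
    have "(j0, None) \<in> set qs"
      by (rule setq[THEN iffD2], rule exI[of _ k0], rule exI[of _ None], rule exI[of _ None])
         (simp add: k0 j0 hv_def)
    moreover have F: "fst ` set qs \<subseteq> {m' (m i)..<m' (m (Suc i))}"
    proof
      fix j assume "j \<in> fst ` set qs"
      then obtain e where "(j,e) \<in> set qs" by force
      then obtain k c d where kcd: "(k,c) \<in> set ps" "(j,d) \<in> set (Q k)" using setq[of j e] by auto
      have k: "m i \<le> k" "k < m (Suc i)" using ps(3) kcd(1) by force+
      have "k \<le> L" using kL[of k] kcd(1) by (simp add: rev_image_eqI)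
      hence "fst ` set (Q k) \<subseteq> {m' k..<m' (Suc k)}" by (rule Q3)
      moreover have "j \<in> fst ` set (Q k)" using kcd(2) by (simp add: rev_image_eqI)
      ultimately have "m' k \<le> j" "j < m' (Suc k)" by auto
      moreover have "m' (m i) \<le> m' k" "m' (Suc k) \<le> m' (m (Suc i))" using mm' k a by auto
      ultimately show "j \<in> {m' (m i)..<m' (m (Suc i))}" by simp
    qed
    moreover have S: "snd ` set qs \<subseteq> Some ` A \<union> {None}"
    proof
      fix e assume "e \<in> snd ` set qs"
      then obtain j where "(j,e) \<in> set qs" by force
      then obtain k c d where kcd: "(k,c) \<in> set ps" "(j,d) \<in> set (Q k)" "e = hv d c" using setq[of j e] by auto
      have "c \<in> snd ` set ps" using kcd(1) by (simp add: rev_image_eqI)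
      hence cA: "c \<in> Some ` A \<union> {None}" using ps(4) by (rule subsetD[rotated])
      have "d \<in> snd ` set (Q k)" using kcd(2) by (simp add: rev_image_eqI)
      moreover have "k \<le> L" using kL[of k] kcd(1) by (simp add: rev_image_eqI)
      ultimately have "d \<in> Some ` A \<union> {None}" using Q4 by (meson subsetD)
      with cA show "e \<in> Some ` A \<union> {None}" using kcd(3) by (auto simp: hv_def split: option.split)
    qed
    ultimately show "t i \<in> vspan A s {m' (m i)..<m' (m (Suc i))}" unfolding vspan_iff
    proof (intro exI[of _ qs] conjI)
      show "qs \<noteq> []" using \<open>(j0, None) \<in> set qs\<close> by auto
      show "None \<in> snd ` set qs" using \<open>(j0, None) \<in> set qs\<close> by (simp add: rev_image_eqI)
      show "sorted_wrt (<) (map fst qs)" by (fact so)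
      show "fst ` set qs \<subseteq> {m' (m i)..<m' (m (Suc i))}" by (fact F)
      show "snd ` set qs \<subseteq> Some ` A \<union> {None}" by (fact S)
      show "t i = concat (map (\<lambda>(l,c). subst_v (s l) c) qs)" by (fact eq)
    qed
  qed
qed

lemma cspan_mono:
  assumes ts: "extracted A t s" shows "cspan A t UNIV \<subseteq> cspan A s UNIV"
proof
  fix x assume "x \<in> cspan A t UNIV"
  then obtain ps where ps: "ps \<noteq> []" "sorted_wrt (<) (map fst ps)"
      "snd ` set ps \<subseteq> A" "x = concat (map (\<lambda>(l,c). subst_c (t l) c) ps)"
    unfolding cspan_iff by blast
  define l where "l = Max (fst ` set ps)"
  have kl: "k \<le> l" if "k \<in> fst ` set ps" for k unfolding l_def using that by simp
  from ts obtain m where m: "m 0 = 0" "\<forall>i\<le>l. m i < m (Suc i)"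
    "\<forall>i\<le>l. t i \<in> vspan A s {m i..<m (Suc i)}" unfolding extracted_def by blast
  have "\<forall>k\<in>{..l}. \<exists>q. q \<noteq> [] \<and> sorted_wrt (<) (map fst q) \<and> fst ` set q \<subseteq> {m k..<m (Suc k)}
   \<and> snd ` set q \<subseteq> Some ` A \<union> {None} \<and> None \<in> snd ` set q
   \<and> t k = concat (map (\<lambda>(l,c). subst_v (s l) c) q)"
    using m(3) unfolding vspan_iff by auto
  then obtain Q where Q: "\<forall>k\<in>{..l}. Q k \<noteq> [] \<and> sorted_wrt (<) (map fst (Q k)) \<and> fst ` set (Q k) \<subseteq> {m k..<m (Suc k)}
   \<and> snd ` set (Q k) \<subseteq> Some ` A \<union> {None} \<and> None \<in> snd ` set (Q k)
   \<and> t k = concat (map (\<lambda>(l,c). subst_v (s l) c) (Q k))"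
    by (rule bchoice[elim_format]) blast
  have Q1: "Q k \<noteq> []" and Q2: "sorted_wrt (<) (map fst (Q k))" and Q3: "fst ` set (Q k) \<subseteq> {m k..<m (Suc k)}"
    and Q4: "snd ` set (Q k) \<subseteq> Some ` A \<union> {None}"
    and Q6: "t k = concat (map (\<lambda>(l,c). subst_v (s l) c) (Q k))" if "k \<le> l" for k
    using Q that by auto
  have mm: "m i \<le> m j" if "i \<le> j" "j \<le> Suc l" for i j using mono_upto[OF m(2)] that by blast
  define qs where "qs = concat (map (\<lambda>(k,c). map (\<lambda>(j,d). (j, hc d c)) (Q k)) ps)"
  have eq: "x = concat (map (\<lambda>(j,e). subst_c (s j) e) qs)"
    unfolding ps(4) qs_def
    by (rule compose_eq[where G=subst_c]) (use Q6 kl in \<open>auto simp: c_concat c_sub\<close>)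
  have so: "sorted_wrt (<) (map fst qs)" unfolding qs_def
  proof (rule sorted_blocks[where m=m])
    show "\<forall>k\<in>fst ` set ps. \<forall>k'\<in>fst ` set ps. k < k' \<longrightarrow> m (Suc k) \<le> m k'"
    proof (intro ballI impI)
      fix k k' assume "k \<in> fst ` set ps" "k' \<in> fst ` set ps" "k < k'"
      then show "m (Suc k) \<le> m k'" using kl[of k'] mm[of "Suc k" k'] by simp
    qed
    show "\<forall>k\<in>fst ` set ps. sorted_wrt (<) (map fst (Q k)) \<and> fst ` set (Q k) \<subseteq> {m k..<m (Suc k)}"
      using Q2 Q3 kl by auto
  qed (fact ps(2))
  have setq: "(j,e) \<in> set qs \<longleftrightarrow> (\<exists>k c d. (k,c) \<in> set ps \<and> (j,d) \<in> set (Q k) \<and> e = hc d c)" for j e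
    unfolding qs_def by (rule set_blocks)
  obtain k0 c0 where k0: "(k0, c0) \<in> set ps" using ps(1) by (cases ps) auto
  have "k0 \<le> l" using kl[of k0] k0 by (simp add: rev_image_eqI)
  then obtain j0 d0 where j0: "(j0, d0) \<in> set (Q k0)" using Q1 by (cases "Q k0") auto
  have "(j0, hc d0 c0) \<in> set qs"
    by (rule setq[THEN iffD2], rule exI[of _ k0], rule exI[of _ c0], rule exI[of _ d0])
       (simp add: k0 j0)
  hence ne: "qs \<noteq> []" by auto
  have S: "snd ` set qs \<subseteq> A"
  proof
    fix e assume "e \<in> snd ` set qs"
    then obtain j where "(j,e) \<in> set qs" by force
    then obtain k c d where kcd: "(k,c) \<in> set ps" "(j,d) \<in> set (Q k)" "e = hc d c" using setq[of j e] by auto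
    have "c \<in> snd ` set ps" using kcd(1) by (simp add: rev_image_eqI)
    hence cA: "c \<in> A" using ps(3) by (rule subsetD[rotated])
    have "d \<in> snd ` set (Q k)" using kcd(2) by (simp add: rev_image_eqI)
    moreover have "k \<le> l" using kl[of k] kcd(1) by (simp add: rev_image_eqI)
    ultimately have "d \<in> Some ` A \<union> {None}" using Q4 by (meson subsetD)
    with cA show "e \<in> A" using kcd(3) by (auto simp: hc_def split: option.split)
  qed
  show "x \<in> cspan A s UNIV" unfolding cspan_iff
    by (intro exI[of _ qs] conjI) (fact ne, fact so, simp, fact S, fact eq)
qed

theorem fact2p5:
  fixes A :: "'a set" and E :: "'a list set" and s :: "nat \<Rightarrow> 'a option list"
    and r :: nat and Es :: "nat \<Rightarrow> 'a list set"
  assumes "finite A" and "A \<noteq> {}"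
    and "\<forall>w\<in>E. is_word A w"
    and "is_vseq A s"
    and "large A E s"
    and "r \<ge> 2"
    and "E = (\<Union>i\<in>{1..r}. Es i)"
  shows "\<exists>i\<in>{1..r}. \<exists>t. is_vseq A t \<and> extracted A t s \<and> large A (Es i) t"
proof (rule ccontr)
  assume nc: "\<not> ?thesis"
  have step: "k \<le> r \<Longrightarrow> \<exists>w. is_vseq A w \<and> extracted A w s \<and> (\<forall>i\<in>{1..k}. Es i \<inter> cspan A w UNIV = {})" for k
  proof (induction k)
    case 0 then show ?case using assms(4) extracted_refl by auto
  next
    case (Suc k)
    then obtain w where w: "is_vseq A w" "extracted A w s" "\<forall>i\<in>{1..k}. Es i \<inter> cspan A w UNIV = {}" by auto
    have "\<not> large A (Es (Suc k)) w" using nc w Suc.prems by auto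
    then obtain w' where w': "is_vseq A w'" "extracted A w' w" "Es (Suc k) \<inter> cspan A w' UNIV = {}"
      unfolding large_def by blast
    have "\<forall>i\<in>{1..Suc k}. Es i \<inter> cspan A w' UNIV = {}"
    proof
      fix i assume "i \<in> {1..Suc k}"
      then consider "i = Suc k" | "i \<in> {1..k}" by force
      then show "Es i \<inter> cspan A w' UNIV = {}"
      proof cases
        case 2 then show ?thesis using w(3) cspan_mono[OF w'(2)] by blast
      qed (use w' in auto)
    qed
    then show ?case using w' w extracted_trans by blast
  qed
  from step[of r] obtain w where w: "is_vseq A w" "extracted A w s" "\<forall>i\<in>{1..r}. Es i \<inter> cspan A w UNIV = {}" by auto
  then have "E \<inter> cspan A w UNIV = {}" using assms(7) by auto
  then show False using assms(5) w unfolding large_def by blast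
qed

end
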